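(* Let $N\ge2$ and consider $N\times N$ permutation matrices $\mathbf C=\sum_{j,k=0}^{N-1}c_{jk}|j\rangle\langle k|$. Consider the decision problem of determining whether $\langle0|\mathbf C|0\rangle=1$ or $\langle0|\mathbf C|0\rangle=0$. (i) Given oracle access to a block-encoding of $\mathbf C$, there is a quantum algorithm that solves this problem with probability $1$ using one query. (ii) Given instead oracle access to an (arbitrary, adversarially chosen) unitary $U_{\mathbf C}$ satisfying $U_{\mathbf C}|0\rangle=|C\rangle\rangle/\||C\rangle\rangle\|=\frac1{\sqrt N}\sum_{j,k}c_{jk}|j,k\rangle$, together with its inverse and controlled versions, any quantum algorithm that solves the problem with probability at least $2/3$ on every instance requires $\Omega(\sqrt N)$ queries.
   Context: Vectorization: for ${\bf F}=\sum_{j,k}f_{jk}|j\rangle\langle k|$, $|F\rangle\rangle:=\sum_{j,k}f_{jk}|j,k\rangle$. A block-encoding of a matrix ${\bf M}\in\mathbb C^{N\times N}$ with $\|{\bf M}\|\le\alpha$ is a unitary $U$ acting on $\mathbb C^N\otimes\mathbb C^{d}$ (ancilla dimension $d\ge1$) with $(\mathbb 1_N\otimes\langle0|)U(\mathbb 1_N\otimes|0\rangle)={\bf M}/\alpha$; here $\alpha=1$. Query counts include queries to inverses and controlled versions of the oracle. *)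

theory Defs
  imports "Jordan_Normal_Form.Schur_Decomposition" "HOL-Combinatorics.Permutations"
begin

(* Kronecker (tensor) product.  Basis convention: |j,k> has index j * dim B + k. *)
definition kron :: "complex mat \<Rightarrow> complex mat \<Rightarrow> complex mat" where
  "kron A B = mat (dim_row A * dim_row B) (dim_col A * dim_col B)
     (\<lambda>(i,j). A $$ (i div dim_row B, j div dim_col B) * B $$ (i mod dim_row B, j mod dim_col B))"

definition unitary_mat :: "nat \<Rightarrow> complex mat \<Rightarrow> bool" where
  "unitary_mat n U \<longleftrightarrow> U \<in> carrier_mat n n \<and> U * mat_adjoint U = 1\<^sub>m n \<and> mat_adjoint U * U = 1\<^sub>m n"

definition perm_matrix :: "nat \<Rightarrow> complex mat \<Rightarrow> bool" where
  "perm_matrix N C \<longleftrightarrow> C \<in> carrier_mat N N \<and>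
     (\<exists>\<sigma>. \<sigma> permutes {..<N} \<and> (\<forall>j<N. \<forall>k<N. C $$ (j,k) = (if j = \<sigma> k then 1 else 0)))"

(* Block-encoding with alpha = 1 and ancilla dimension d: U acts on C^N (x) C^d,
   (1_N (x) <0|) U (1_N (x) |0>) = M. *)
definition block_encoding :: "nat \<Rightarrow> nat \<Rightarrow> complex mat \<Rightarrow> complex mat \<Rightarrow> bool" where
  "block_encoding N d M U \<longleftrightarrow> d \<ge> 1 \<and> unitary_mat (N * d) U \<and>
     (\<forall>j<N. \<forall>k<N. U $$ (j * d, k * d) = M $$ (j, k))"

definition vectorize :: "nat \<Rightarrow> complex mat \<Rightarrow> complex vec" where
  "vectorize N F = vec (N * N) (\<lambda>i. F $$ (i div N, i mod N))"

definition vec_norm2 :: "complex vec \<Rightarrow> real" where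
  "vec_norm2 v = sqrt (\<Sum>i<dim_vec v. (cmod (v $ i))\<^sup>2)"

definition state_prep_oracle :: "nat \<Rightarrow> complex mat \<Rightarrow> complex mat \<Rightarrow> bool" where
  "state_prep_oracle N C U \<longleftrightarrow> unitary_mat (N * N) U \<and>
     U *\<^sub>v unit_vec (N * N) 0 = (1 / complex_of_real (vec_norm2 (vectorize N C))) \<cdot>\<^sub>v vectorize N C"

(* The algorithm's state space is
   C^2 (control qubit) (x) C^n (oracle register) (x) C^w (workspace), of dimension 2*n*w.
   A query is specified by (controlled?, inverse?); it applies
     plain:      1_2 (x) O' (x) 1_w
     controlled: |0><0| (x) 1_n (x) 1_w  +  |1><1| (x) O' (x) 1_w
   where O' = O or O' = O^dagger.  Between queries arbitrary (oracle-independent)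
   unitaries are applied; the algorithm starts in |0>, and finally measures in the
   computational basis and outputs 1 iff the outcome lies in the set Acc. *)

record qalg =
  work_dim :: nat
  init_unitary :: "complex mat"
  steps :: "((bool \<times> bool) \<times> complex mat) list"
  accept_set :: "nat set"

definition proj0 :: "complex mat" where "proj0 = mat 2 2 (\<lambda>(i,j). if i = 0 \<and> j = 0 then 1 else 0)"
definition proj1 :: "complex mat" where "proj1 = mat 2 2 (\<lambda>(i,j). if i = 1 \<and> j = 1 then 1 else 0)"

definition query_op :: "nat \<Rightarrow> nat \<Rightarrow> complex mat \<Rightarrow> bool \<times> bool \<Rightarrow> complex mat" where
  "query_op n w Orc q = (let Orc' = (if snd q then mat_adjoint Orc else Orc) in
     if fst q then kron proj0 (1\<^sub>m (n * w)) + kron proj1 (kron Orc' (1\<^sub>m w))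
     else kron (1\<^sub>m 2) (kron Orc' (1\<^sub>m w)))"

definition alg_dim :: "nat \<Rightarrow> qalg \<Rightarrow> nat" where
  "alg_dim n A = 2 * n * work_dim A"

definition wf_qalg :: "nat \<Rightarrow> qalg \<Rightarrow> bool" where
  "wf_qalg n A \<longleftrightarrow> work_dim A \<ge> 1 \<and> unitary_mat (alg_dim n A) (init_unitary A) \<and>
     (\<forall>s \<in> set (steps A). unitary_mat (alg_dim n A) (snd s))"

definition num_queries :: "qalg \<Rightarrow> nat" where
  "num_queries A = length (steps A)"

definition final_state :: "nat \<Rightarrow> qalg \<Rightarrow> complex mat \<Rightarrow> complex vec" where
  "final_state n A Orc =
     foldl (\<lambda>\<psi> (q, V). V *\<^sub>v (query_op n (work_dim A) Orc q *\<^sub>v \<psi>))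
       (init_unitary A *\<^sub>v unit_vec (alg_dim n A) 0) (steps A)"

definition prob_output1 :: "nat \<Rightarrow> qalg \<Rightarrow> complex mat \<Rightarrow> real" where
  "prob_output1 n A Orc = (\<Sum>i \<in> accept_set A \<inter> {..<alg_dim n A}. (cmod (final_state n A Orc $ i))\<^sup>2)"

definition success_prob :: "nat \<Rightarrow> qalg \<Rightarrow> complex mat \<Rightarrow> complex mat \<Rightarrow> real" where
  "success_prob n A C Orc =
     (if C $$ (0,0) = 1 then prob_output1 n A Orc else 1 - prob_output1 n A Orc)"

end

theory Submission
  imports Defs "HOL-Analysis.L2_Norm"
begin

definition nv :: "complex vec \<Rightarrow> real" where
  "nv x = L2_set (\<lambda>i. cmod (x $ i)) {..<dim_vec x}"

lemma nv_eq: "nv x = vec_norm2 x"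
  unfolding nv_def vec_norm2_def L2_set_def by simp

lemma nv_nonneg[simp]: "0 \<le> nv x" unfolding nv_def by simp

lemma nv_sq: "(nv x)^2 = (\<Sum>i<dim_vec x. (cmod (x $ i))^2)"
  unfolding nv_def L2_set_def by (simp add: sum_nonneg)

lemma nv_add: assumes "x \<in> carrier_vec n" "y \<in> carrier_vec n"
  shows "nv (x + y) \<le> nv x + nv y"
proof -
  have "nv (x + y) = L2_set (\<lambda>i. cmod ((x+y) $ i)) {..<n}" using assms unfolding nv_def by simp
  also have "\<dots> \<le> L2_set (\<lambda>i. cmod (x $ i) + cmod (y $ i)) {..<n}"
    by (rule L2_set_mono) (use assms in \<open>auto intro: norm_triangle_ineq\<close>)
  also have "\<dots> \<le> L2_set (\<lambda>i. cmod (x $ i)) {..<n} + L2_set (\<lambda>i. cmod (y $ i)) {..<n}"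
    by (rule L2_set_triangle_ineq)
  also have "\<dots> = nv x + nv y" using assms unfolding nv_def by simp
  finally show ?thesis .
qed

lemma nv_diff: assumes "x \<in> carrier_vec n" "y \<in> carrier_vec n"
  shows "nv (x - y) \<le> nv x + nv y"
proof -
  have "nv (x - y) = L2_set (\<lambda>i. cmod ((x-y) $ i)) {..<n}" using assms unfolding nv_def by simp
  also have "\<dots> \<le> L2_set (\<lambda>i. cmod (x $ i) + cmod (y $ i)) {..<n}"
    by (rule L2_set_mono) (use assms in \<open>auto intro: norm_triangle_ineq4\<close>)
  also have "\<dots> \<le> L2_set (\<lambda>i. cmod (x $ i)) {..<n} + L2_set (\<lambda>i. cmod (y $ i)) {..<n}"
    by (rule L2_set_triangle_ineq)
  also have "\<dots> = nv x + nv y" using assms unfolding nv_def by simp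
  finally show ?thesis .
qed

lemma nv_smult: "nv (c \<cdot>\<^sub>v x) = cmod c * nv x"
proof -
  have "nv (c \<cdot>\<^sub>v x) = L2_set (\<lambda>i. cmod c * cmod (x $ i)) {..<dim_vec x}"
    unfolding nv_def by (intro L2_set_cong) (auto simp: norm_mult)
  also have "\<dots> = cmod c * nv x" unfolding nv_def by (simp add: L2_set_right_distrib)
  finally show ?thesis .
qed

lemma nv_minus_comm: assumes "x \<in> carrier_vec n" "y \<in> carrier_vec n"
  shows "nv (x - y) = nv (y - x)"
  unfolding nv_def using assms by (intro L2_set_cong) (auto simp: norm_minus_commute)

lemma nv_tri: assumes "x \<in> carrier_vec n" "y \<in> carrier_vec n" "z \<in> carrier_vec n"
  shows "nv (x - z) \<le> nv (x - y) + nv (y - z)"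
proof -
  have "x - z = (x - y) + (y - z)" using assms by auto
  then show ?thesis using nv_add[of "x - y" n "y - z"] assms by auto
qed

lemma cs_sum: "cmod (\<Sum>i<n. x $ i * y $ i) \<le> nv (vec n (\<lambda>i. x $ i)) * nv (vec n (\<lambda>i. y $ i))"
proof -
  have "cmod (\<Sum>i<n. x $ i * y $ i) \<le> (\<Sum>i<n. \<bar>cmod (x $ i)\<bar> * \<bar>cmod (y $ i)\<bar>)"
    by (rule order_trans[OF norm_sum]) (simp add: norm_mult)
  also have "\<dots> \<le> L2_set (\<lambda>i. cmod (x $ i)) {..<n} * L2_set (\<lambda>i. cmod (y $ i)) {..<n}"
    by (rule L2_set_mult_ineq)
  also have "\<dots> = nv (vec n (\<lambda>i. x $ i)) * nv (vec n (\<lambda>i. y $ i))"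
    unfolding nv_def by (auto intro!: arg_cong2[where f="(*)"] L2_set_cong)
  finally show ?thesis .
qed

lemma adj_carrier: "U \<in> carrier_mat n m \<Longrightarrow> mat_adjoint U \<in> carrier_mat m n"
  unfolding mat_adjoint_def by auto

lemma adj_idx: "U \<in> carrier_mat n m \<Longrightarrow> i < m \<Longrightarrow> j < n \<Longrightarrow> mat_adjoint U $$ (i,j) = cnj (U $$ (j,i))"
  unfolding mat_adjoint_def by (auto simp: mat_of_rows_index)

lemma mv_idx: "U \<in> carrier_mat n m \<Longrightarrow> x \<in> carrier_vec m \<Longrightarrow> i < n \<Longrightarrow>
   (U *\<^sub>v x) $ i = (\<Sum>j<m. U $$ (i,j) * x $ j)"
  by (auto simp: scalar_prod_def atLeast0LessThan intro!: sum.cong)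

lemma nv_sq_c: "complex_of_real ((nv x)^2) = (\<Sum>i<dim_vec x. x $ i * cnj (x $ i))"
  unfolding nv_sq of_real_sum by (intro sum.cong refl) (rule complex_norm_square)

lemma unitary_nv: assumes U: "unitary_mat n U" and x: "x \<in> carrier_vec n"
  shows "nv (U *\<^sub>v x) = nv x"
proof -
  have Uc: "U \<in> carrier_mat n n" and A: "mat_adjoint U * U = 1\<^sub>m n" using U unfolding unitary_mat_def by auto
  have d: "\<And>k j. k < n \<Longrightarrow> j < n \<Longrightarrow> (\<Sum>i<n. cnj (U $$ (i,k)) * U $$ (i,j)) = (if k = j then 1 else 0)"
  proof -
    fix k j assume k: "k < n" and j: "j < n"
    have "(mat_adjoint U * U) $$ (k,j) = (\<Sum>i<n. cnj (U $$ (i,k)) * U $$ (i,j))"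
      using Uc k j adj_carrier[OF Uc] by (auto simp: scalar_prod_def atLeast0LessThan adj_idx intro!: sum.cong)
    then show "(\<Sum>i<n. cnj (U $$ (i,k)) * U $$ (i,j)) = (if k = j then 1 else 0)" using A k j by auto
  qed
  have "complex_of_real ((nv (U *\<^sub>v x))^2) = (\<Sum>i<n. (\<Sum>j<n. U $$ (i,j) * x $ j) * cnj (\<Sum>k<n. U $$ (i,k) * x $ k))"
    unfolding nv_sq_c using Uc x by (intro sum.cong) (auto simp: mv_idx[OF Uc x] cnj_sum simp del: index_mult_mat_vec)
  also have "\<dots> = (\<Sum>i<n. \<Sum>k<n. \<Sum>j<n. x $ j * cnj (x $ k) * (cnj (U $$ (i,k)) * U $$ (i,j)))"
    by (simp add: cnj_sum sum_product sum_distrib_left sum_distrib_right mult_ac)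
  also have "\<dots> = (\<Sum>k<n. \<Sum>i<n. \<Sum>j<n. x $ j * cnj (x $ k) * (cnj (U $$ (i,k)) * U $$ (i,j)))"
    by (rule sum.swap)
  also have "\<dots> = (\<Sum>k<n. \<Sum>j<n. \<Sum>i<n. x $ j * cnj (x $ k) * (cnj (U $$ (i,k)) * U $$ (i,j)))"
    by (rule sum.cong[OF refl], rule sum.swap)
  also have "\<dots> = (\<Sum>j<n. \<Sum>k<n. \<Sum>i<n. x $ j * cnj (x $ k) * (cnj (U $$ (i,k)) * U $$ (i,j)))"
    by (rule sum.swap)
  also have "\<dots> = (\<Sum>j<n. \<Sum>k<n. x $ j * cnj (x $ k) * (\<Sum>i<n. cnj (U $$ (i,k)) * U $$ (i,j)))"
    by (simp add: sum_distrib_left)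
  also have "\<dots> = (\<Sum>j<n. \<Sum>k<n. x $ j * cnj (x $ k) * (if k = j then 1 else 0))"
    by (intro sum.cong refl) (simp add: d)
  also have "\<dots> = (\<Sum>j<n. x $ j * cnj (x $ j))"
    by (simp add: if_distrib cong: if_cong)
  also have "\<dots> = complex_of_real ((nv x)^2)" unfolding nv_sq_c using x by auto
  finally have "(nv (U *\<^sub>v x))^2 = (nv x)^2" using of_real_eq_iff by blast
  then show ?thesis by (simp add: power2_eq_iff_nonneg)
qed

lemma sum_split: fixes m n :: nat shows "(\<Sum>i<m*n. f i) = (\<Sum>c<m. \<Sum>l<n. f (c*n + l))"
proof -
  have "(\<Sum>i<m*n. f i) = (\<Sum>c<m. sum f {c*n..<c*n+n})"
    using sum.nat_group[of f n m] by simp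
  also have "\<dots> = (\<Sum>c<m. \<Sum>l<n. f (c*n + l))"
  proof (rule sum.cong[OF refl])
    fix c assume "c \<in> {..<m}"
    show "sum f {c*n..<c*n+n} = (\<Sum>l<n. f (c*n + l))"
      using sum.shift_bounds_nat_ivl[of f 0 "c*n" n] by (simp add: atLeast0LessThan add.commute)
  qed
  finally show ?thesis .
qed

lemma idx_lt: fixes c m l n :: nat assumes "c < m" "l < n" shows "c*n + l < m*n"
proof -
  have "c*n + l < c*n + n" using assms by simp
  also have "\<dots> = Suc c * n" by simp
  also have "\<dots> \<le> m*n" using assms by (intro mult_le_mono1) simp
  finally show ?thesis .
qed

definition blk :: "nat \<Rightarrow> complex vec \<Rightarrow> nat \<Rightarrow> complex vec" where
  "blk n x c = vec n (\<lambda>l. x $ (c*n + l))"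

definition slc :: "nat \<Rightarrow> nat \<Rightarrow> complex vec \<Rightarrow> nat \<Rightarrow> complex vec" where
  "slc n w x l = vec n (\<lambda>a. x $ (a*w + l))"

lemma blk_carrier[simp]: "blk n x c \<in> carrier_vec n" unfolding blk_def by auto
lemma dim_blk[simp]: "dim_vec (blk n x c) = n" unfolding blk_def by auto
lemma dim_slc[simp]: "dim_vec (slc n w x l) = n" unfolding slc_def by auto
lemma slc_carrier[simp]: "slc n w x l \<in> carrier_vec n" unfolding slc_def by auto

lemma nsq_blk: assumes "x \<in> carrier_vec (m*n)"
  shows "(nv x)^2 = (\<Sum>c<m. (nv (blk n x c))^2)"
  using assms unfolding nv_sq blk_def by (simp add: sum_split[of _ m n])

lemma nsq_slc: assumes "x \<in> carrier_vec (n*w)"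
  shows "(nv x)^2 = (\<Sum>l<w. (nv (slc n w x l))^2)"
  using assms unfolding nv_sq slc_def by (simp add: sum_split[of _ n w] sum.swap[of _ "{..<n}"])

lemma blk_kron: assumes P: "P \<in> carrier_mat m m" and Pd: "\<And>c c'. c < m \<Longrightarrow> c' < m \<Longrightarrow> c \<noteq> c' \<Longrightarrow> P $$ (c,c') = 0"
  and K: "K \<in> carrier_mat n n" and x: "x \<in> carrier_vec (m*n)" and c: "c < m"
  shows "blk n (kron P K *\<^sub>v x) c = P $$ (c,c) \<cdot>\<^sub>v (K *\<^sub>v blk n x c)"
proof (rule eq_vecI)
  have kc: "kron P K \<in> carrier_mat (m*n) (m*n)" using P K unfolding kron_def by auto
  show "dim_vec (blk n (kron P K *\<^sub>v x) c) = dim_vec (P $$ (c,c) \<cdot>\<^sub>v (K *\<^sub>v blk n x c))" using K by (simp add: blk_def)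
  fix l assume "l < dim_vec (P $$ (c,c) \<cdot>\<^sub>v (K *\<^sub>v blk n x c))"
  then have l: "l < n" using K by simp
  have i: "c*n + l < m*n" using c l
    by (intro idx_lt) auto
  have "blk n (kron P K *\<^sub>v x) c $ l = (kron P K *\<^sub>v x) $ (c*n+l)" unfolding blk_def using l by simp
  also have "\<dots> = (\<Sum>j<m*n. kron P K $$ (c*n+l, j) * x $ j)" by (rule mv_idx[OF kc x i])
  also have "\<dots> = (\<Sum>c'<m. \<Sum>l'<n. kron P K $$ (c*n+l, c'*n+l') * x $ (c'*n+l'))" by (rule sum_split)
  also have "\<dots> = (\<Sum>c'<m. \<Sum>l'<n. P $$ (c, c') * K $$ (l, l') * x $ (c'*n+l'))"
  proof (intro sum.cong refl)
    fix c' l' assume c': "c' \<in> {..<m}" and l': "l' \<in> {..<n}"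
    have j: "c'*n + l' < m*n" using c' l'
      by (intro idx_lt) auto
    show "kron P K $$ (c*n+l, c'*n+l') * x $ (c'*n+l') = P $$ (c, c') * K $$ (l, l') * x $ (c'*n+l')"
      using P K i j l l' unfolding kron_def by auto
  qed
  also have "\<dots> = (\<Sum>c'<m. if c' = c then (\<Sum>l'<n. P $$ (c, c) * K $$ (l, l') * x $ (c*n+l')) else 0)"
    by (intro sum.cong refl) (use Pd c in auto)
  also have "\<dots> = P $$ (c,c) * (\<Sum>l'<n. K $$ (l, l') * x $ (c*n+l'))"
    using c by (simp add: sum_distrib_left mult_ac)
  also have "\<dots> = (P $$ (c, c) \<cdot>\<^sub>v (K *\<^sub>v blk n x c)) $ l"
    by (subst index_smult_vec, use K l in simp, subst mv_idx[OF K blk_carrier l]) (auto simp: blk_def intro!: sum.cong)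
  finally show "blk n (kron P K *\<^sub>v x) c $ l = (P $$ (c, c) \<cdot>\<^sub>v (K *\<^sub>v blk n x c)) $ l" .
qed

lemma slc_kron: assumes D: "D \<in> carrier_mat n n" and x: "x \<in> carrier_vec (n*w)" and l: "l < w"
  shows "slc n w (kron D (1\<^sub>m w) *\<^sub>v x) l = D *\<^sub>v slc n w x l"
proof (rule eq_vecI)
  have kc: "kron D (1\<^sub>m w) \<in> carrier_mat (n*w) (n*w)" using D unfolding kron_def by auto
  show "dim_vec (slc n w (kron D (1\<^sub>m w) *\<^sub>v x) l) = dim_vec (D *\<^sub>v slc n w x l)" using D by (simp add: slc_def)
  fix a assume "a < dim_vec (D *\<^sub>v slc n w x l)"
  then have a: "a < n" using D by simp
  have i: "a*w + l < n*w" using a l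
    by (intro idx_lt) auto
  have "slc n w (kron D (1\<^sub>m w) *\<^sub>v x) l $ a = (kron D (1\<^sub>m w) *\<^sub>v x) $ (a*w+l)" unfolding slc_def using a by simp
  also have "\<dots> = (\<Sum>j<n*w. kron D (1\<^sub>m w) $$ (a*w+l, j) * x $ j)" by (rule mv_idx[OF kc x i])
  also have "\<dots> = (\<Sum>a'<n. \<Sum>l'<w. kron D (1\<^sub>m w) $$ (a*w+l, a'*w+l') * x $ (a'*w+l'))" by (rule sum_split)
  also have "\<dots> = (\<Sum>a'<n. \<Sum>l'<w. if l' = l then D $$ (a, a') * x $ (a'*w+l) else 0)"
  proof (intro sum.cong refl)
    fix a' l' assume a': "a' \<in> {..<n}" and l': "l' \<in> {..<w}"
    have j: "a'*w + l' < n*w" using a' l'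
      by (intro idx_lt) auto
    show "kron D (1\<^sub>m w) $$ (a*w+l, a'*w+l') * x $ (a'*w+l') = (if l' = l then D $$ (a, a') * x $ (a'*w+l) else 0)"
      using D i j l l' unfolding kron_def by auto
  qed
  also have "\<dots> = (\<Sum>a'<n. D $$ (a, a') * x $ (a'*w+l))"
    using l by simp
  also have "\<dots> = (D *\<^sub>v slc n w x l) $ a"
    by (subst mv_idx[OF D slc_carrier a]) (auto simp: slc_def intro!: sum.cong)
  finally show "slc n w (kron D (1\<^sub>m w) *\<^sub>v x) l $ a = (D *\<^sub>v slc n w x l) $ a" .
qed

lemma kron_carrier: "A \<in> carrier_mat a a \<Longrightarrow> B \<in> carrier_mat b b \<Longrightarrow> kron A B \<in> carrier_mat (a*b) (a*b)"
  unfolding kron_def by auto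

lemma blk_add: "x \<in> carrier_vec (m*n) \<Longrightarrow> y \<in> carrier_vec (m*n) \<Longrightarrow> c < m \<Longrightarrow> blk n (x + y) c = blk n x c + blk n y c"
  unfolding blk_def by (intro eq_vecI) (use idx_lt[of c m _ n] in auto)

lemma blk_minus: "x \<in> carrier_vec (m*n) \<Longrightarrow> y \<in> carrier_vec (m*n) \<Longrightarrow> c < m \<Longrightarrow> blk n (x - y) c = blk n x c - blk n y c"
  unfolding blk_def by (intro eq_vecI) (use idx_lt[of c m _ n] in auto)

lemma slc_minus: "x \<in> carrier_vec (n*w) \<Longrightarrow> y \<in> carrier_vec (n*w) \<Longrightarrow> l < w \<Longrightarrow> slc n w (x - y) l = slc n w x l - slc n w y l"
  unfolding slc_def by (intro eq_vecI) (use idx_lt[of _ n l w] in auto)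

lemma proj0_carrier[simp]: "proj0 \<in> carrier_mat 2 2" unfolding proj0_def by auto
lemma proj1_carrier[simp]: "proj1 \<in> carrier_mat 2 2" unfolding proj1_def by auto

lemma proj0_idx: "c < 2 \<Longrightarrow> c' < 2 \<Longrightarrow> proj0 $$ (c,c') = (if c = 0 \<and> c' = 0 then 1 else 0)"
  unfolding proj0_def by auto
lemma proj1_idx: "c < 2 \<Longrightarrow> c' < 2 \<Longrightarrow> proj1 $$ (c,c') = (if c = 1 \<and> c' = 1 then 1 else 0)"
  unfolding proj1_def by auto

lemma Q_blk: assumes Om: "Om \<in> carrier_mat n n" and adj: "mat_adjoint Om = Om"
  and x: "x \<in> carrier_vec (2*(n*w))" and c: "c < 2"
  shows "blk (n*w) (query_op n w Om q *\<^sub>v x) c =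
     (if fst q \<and> c = 0 then blk (n*w) x c else kron Om (1\<^sub>m w) *\<^sub>v blk (n*w) x c)"
proof -
  have K: "kron Om (1\<^sub>m w) \<in> carrier_mat (n*w) (n*w)" using kron_carrier[OF Om, of "1\<^sub>m w" w] by simp
  have I: "1\<^sub>m (n*w) \<in> carrier_mat (n*w) (n*w)" by simp
  show ?thesis
  proof (cases "fst q")
    case False
    have "query_op n w Om q = kron (1\<^sub>m 2) (kron Om (1\<^sub>m w))"
      unfolding query_op_def Let_def using False adj by simp
    then show ?thesis using False blk_kron[of "1\<^sub>m 2" 2 "kron Om (1\<^sub>m w)" "n*w" x c] K x c by simp
  next
    case True
    have pd0: "\<And>c c'. c < 2 \<Longrightarrow> c' < 2 \<Longrightarrow> c \<noteq> c' \<Longrightarrow> proj0 $$ (c,c') = 0" by (auto simp add: proj0_idx)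
    have pd1: "\<And>c c'. c < 2 \<Longrightarrow> c' < 2 \<Longrightarrow> c \<noteq> c' \<Longrightarrow> proj1 $$ (c,c') = 0" by (auto simp add: proj1_idx)
    have qe: "query_op n w Om q = kron proj0 (1\<^sub>m (n*w)) + kron proj1 (kron Om (1\<^sub>m w))"
      unfolding query_op_def Let_def using True adj by simp
    have c0: "kron proj0 (1\<^sub>m (n*w)) \<in> carrier_mat (2*(n*w)) (2*(n*w))"
      using kron_carrier[OF proj0_carrier I] .
    have c1: "kron proj1 (kron Om (1\<^sub>m w)) \<in> carrier_mat (2*(n*w)) (2*(n*w))"
      using kron_carrier[OF proj1_carrier K] .
    have "query_op n w Om q *\<^sub>v x = kron proj0 (1\<^sub>m (n*w)) *\<^sub>v x + kron proj1 (kron Om (1\<^sub>m w)) *\<^sub>v x"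
      unfolding qe by (rule add_mult_distrib_mat_vec[OF c0 c1 x])
    then have "blk (n*w) (query_op n w Om q *\<^sub>v x) c =
       blk (n*w) (kron proj0 (1\<^sub>m (n*w)) *\<^sub>v x) c + blk (n*w) (kron proj1 (kron Om (1\<^sub>m w)) *\<^sub>v x) c"
      using blk_add[of _ 2 "n*w"] c0 c1 x c by simp
    also have "\<dots> = proj0 $$ (c,c) \<cdot>\<^sub>v (1\<^sub>m (n*w) *\<^sub>v blk (n*w) x c) + proj1 $$ (c,c) \<cdot>\<^sub>v (kron Om (1\<^sub>m w) *\<^sub>v blk (n*w) x c)"
      using blk_kron[OF proj0_carrier pd0 I x c] blk_kron[OF proj1_carrier pd1 K x c]
      by simp
    also have "\<dots> = (if fst q \<and> c = 0 then blk (n*w) x c else kron Om (1\<^sub>m w) *\<^sub>v blk (n*w) x c)"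
      using True c K by (cases "c = 0") (auto simp: proj0_idx proj1_idx intro!: eq_vecI)
    finally show ?thesis .
  qed
qed

lemma K_norm: assumes Om: "unitary_mat n Om" and y: "y \<in> carrier_vec (n*w)"
  shows "nv (kron Om (1\<^sub>m w) *\<^sub>v y) = nv y"
proof -
  have Oc: "Om \<in> carrier_mat n n" using Om unfolding unitary_mat_def by auto
  have K: "kron Om (1\<^sub>m w) \<in> carrier_mat (n*w) (n*w)" using kron_carrier[OF Oc, of "1\<^sub>m w" w] by simp
  have "(nv (kron Om (1\<^sub>m w) *\<^sub>v y))^2 = (\<Sum>l<w. (nv (slc n w (kron Om (1\<^sub>m w) *\<^sub>v y) l))^2)"
    using K y by (intro nsq_slc) auto
  also have "\<dots> = (\<Sum>l<w. (nv (slc n w y l))^2)"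
    by (intro sum.cong refl) (simp add: slc_kron[OF Oc y] unitary_nv[OF Om])
  also have "\<dots> = (nv y)^2" using nsq_slc[OF y] by simp
  finally show ?thesis by (simp add: power2_eq_iff_nonneg)
qed

lemma K_diff: assumes Oa: "Oa \<in> carrier_mat n n" and Ob: "Ob \<in> carrier_mat n n" and e0: "0 \<le> \<epsilon>"
  and eps: "\<And>z. z \<in> carrier_vec n \<Longrightarrow> nv (Oa *\<^sub>v z - Ob *\<^sub>v z) \<le> \<epsilon> * nv z" and y: "y \<in> carrier_vec (n*w)"
  shows "nv (kron Oa (1\<^sub>m w) *\<^sub>v y - kron Ob (1\<^sub>m w) *\<^sub>v y) \<le> \<epsilon> * nv y"
proof -
  have K1: "kron Oa (1\<^sub>m w) \<in> carrier_mat (n*w) (n*w)" using kron_carrier[OF Oa, of "1\<^sub>m w" w] by simp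
  have K0: "kron Ob (1\<^sub>m w) \<in> carrier_mat (n*w) (n*w)" using kron_carrier[OF Ob, of "1\<^sub>m w" w] by simp
  have "(nv (kron Oa (1\<^sub>m w) *\<^sub>v y - kron Ob (1\<^sub>m w) *\<^sub>v y))^2
      = (\<Sum>l<w. (nv (slc n w (kron Oa (1\<^sub>m w) *\<^sub>v y - kron Ob (1\<^sub>m w) *\<^sub>v y) l))^2)"
    using K1 K0 y by (intro nsq_slc) auto
  also have "\<dots> = (\<Sum>l<w. (nv (Oa *\<^sub>v slc n w y l - Ob *\<^sub>v slc n w y l))^2)"
    by (intro sum.cong refl) (use K1 K0 y in \<open>simp add: slc_minus slc_kron[OF Oa y] slc_kron[OF Ob y]\<close>)
  also have "\<dots> \<le> (\<Sum>l<w. (\<epsilon> * nv (slc n w y l))^2)"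
    by (intro sum_mono power_mono eps) auto
  also have "\<dots> = (\<epsilon> * nv y)^2"
    using nsq_slc[OF y] by (simp add: power_mult_distrib sum_distrib_left)
  finally show ?thesis using e0 by (simp add: power2_le_iff_abs_le)
qed

lemma nv_self: "nv (v - v) = 0"
  unfolding nv_def by (intro L2_set_0') auto

lemma Q_carrier: assumes Om: "Om \<in> carrier_mat n n"
  shows "query_op n w Om q \<in> carrier_mat (2*(n*w)) (2*(n*w))"
proof -
  have A: "(if snd q then mat_adjoint Om else Om) \<in> carrier_mat n n" using Om adj_carrier[OF Om] by auto
  have K: "kron (if snd q then mat_adjoint Om else Om) (1\<^sub>m w) \<in> carrier_mat (n*w) (n*w)"
    using kron_carrier[OF A, of "1\<^sub>m w" w] by simp
  have I: "1\<^sub>m (n*w) \<in> carrier_mat (n*w) (n*w)" by simp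
  show ?thesis unfolding query_op_def Let_def
    using kron_carrier[OF proj0_carrier I] kron_carrier[OF proj1_carrier K] kron_carrier[OF one_carrier_mat K]
    by auto
qed

lemma Q_norm: assumes O: "unitary_mat n Om" and adj: "mat_adjoint Om = Om" and x: "x \<in> carrier_vec (2*(n*w))"
  shows "nv (query_op n w Om q *\<^sub>v x) = nv x"
proof -
  have Oc: "Om \<in> carrier_mat n n" using O unfolding unitary_mat_def by auto
  have Qc: "query_op n w Om q *\<^sub>v x \<in> carrier_vec (2*(n*w))" using mult_mat_vec_carrier[OF Q_carrier[OF Oc, of w q] x] .
  have "(nv (query_op n w Om q *\<^sub>v x))^2 = (\<Sum>c<2. (nv (blk (n*w) (query_op n w Om q *\<^sub>v x) c))^2)"
    by (rule nsq_blk[OF Qc])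
  also have "\<dots> = (\<Sum>c<2. (nv (blk (n*w) x c))^2)"
    by (intro sum.cong refl) (simp add: Q_blk[OF Oc adj x] K_norm[OF O])
  also have "\<dots> = (nv x)^2" using nsq_blk[OF x] by simp
  finally show ?thesis by (simp add: power2_eq_iff_nonneg)
qed

lemma Q_diff: assumes Oa: "Oa \<in> carrier_mat n n" and Ob: "Ob \<in> carrier_mat n n"
  and adja: "mat_adjoint Oa = Oa" and adjb: "mat_adjoint Ob = Ob" and e0: "0 \<le> \<epsilon>"
  and eps: "\<And>z. z \<in> carrier_vec n \<Longrightarrow> nv (Oa *\<^sub>v z - Ob *\<^sub>v z) \<le> \<epsilon> * nv z" and x: "x \<in> carrier_vec (2*(n*w))"
  shows "nv (query_op n w Oa q *\<^sub>v x - query_op n w Ob q *\<^sub>v x) \<le> \<epsilon> * nv x"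
proof -
  have Qa: "query_op n w Oa q *\<^sub>v x \<in> carrier_vec (2*(n*w))" using mult_mat_vec_carrier[OF Q_carrier[OF Oa, of w q] x] .
  have Qb: "query_op n w Ob q *\<^sub>v x \<in> carrier_vec (2*(n*w))" using mult_mat_vec_carrier[OF Q_carrier[OF Ob, of w q] x] .
  have "(nv (query_op n w Oa q *\<^sub>v x - query_op n w Ob q *\<^sub>v x))^2
     = (\<Sum>c<2. (nv (blk (n*w) (query_op n w Oa q *\<^sub>v x - query_op n w Ob q *\<^sub>v x) c))^2)"
    by (rule nsq_blk) (use Qa Qb in auto)
  also have "\<dots> \<le> (\<Sum>c<2. (\<epsilon> * nv (blk (n*w) x c))^2)"
  proof (rule sum_mono)
    fix c assume c: "c \<in> {..<2::nat}"
    have "nv (blk (n*w) (query_op n w Oa q *\<^sub>v x - query_op n w Ob q *\<^sub>v x) c) \<le> \<epsilon> * nv (blk (n*w) x c)"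
    proof (cases "fst q \<and> c = 0")
      case True
      then show ?thesis using c e0
        by (simp add: blk_minus[OF Qa Qb] Q_blk[OF Oa adja x] Q_blk[OF Ob adjb x] nv_self)
    next
      case False
      have "blk (n*w) (query_op n w Oa q *\<^sub>v x - query_op n w Ob q *\<^sub>v x) c
         = kron Oa (1\<^sub>m w) *\<^sub>v blk (n*w) x c - kron Ob (1\<^sub>m w) *\<^sub>v blk (n*w) x c"
        using c False by (auto simp add: blk_minus[OF Qa Qb] Q_blk[OF Oa adja x] Q_blk[OF Ob adjb x])
      then show ?thesis using K_diff[OF Oa Ob e0 eps blk_carrier] by simp
    qed
    then show "(nv (blk (n*w) (query_op n w Oa q *\<^sub>v x - query_op n w Ob q *\<^sub>v x) c))^2 \<le> (\<epsilon> * nv (blk (n*w) x c))^2"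
      by (intro power_mono) auto
  qed
  also have "\<dots> = (\<epsilon> * nv x)^2"
    using nsq_blk[OF x] by (simp add: power_mult_distrib sum_distrib_left)
  finally show ?thesis using e0 by (simp add: power2_le_iff_abs_le)
qed

lemma fold_props:
  assumes O: "unitary_mat n Om" and adj: "mat_adjoint Om = Om"
  and V: "\<forall>s \<in> set ss. unitary_mat (2*(n*w)) (snd s)" and x: "x \<in> carrier_vec (2*(n*w))"
  shows "foldl (\<lambda>\<psi> (q, V). V *\<^sub>v (query_op n w Om q *\<^sub>v \<psi>)) x ss \<in> carrier_vec (2*(n*w)) \<and>
         nv (foldl (\<lambda>\<psi> (q, V). V *\<^sub>v (query_op n w Om q *\<^sub>v \<psi>)) x ss) = nv x"
  using V x
proof (induction ss arbitrary: x)
  case Nil then show ?case by simp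
next
  case (Cons s ss)
  obtain q V where s: "s = (q, V)" by (cases s)
  have Oc: "Om \<in> carrier_mat n n" using O unfolding unitary_mat_def by auto
  have Vu: "unitary_mat (2*(n*w)) V" using Cons.prems s by auto
  have Vc: "V \<in> carrier_mat (2*(n*w)) (2*(n*w))" using Vu unfolding unitary_mat_def by auto
  have Qx: "query_op n w Om q *\<^sub>v x \<in> carrier_vec (2*(n*w))"
    using mult_mat_vec_carrier[OF Q_carrier[OF Oc, of w q] Cons.prems(2)] .
  have y: "V *\<^sub>v (query_op n w Om q *\<^sub>v x) \<in> carrier_vec (2*(n*w))" using Vc Qx by auto
  have ny: "nv (V *\<^sub>v (query_op n w Om q *\<^sub>v x)) = nv x"
    using unitary_nv[OF Vu Qx] Q_norm[OF O adj Cons.prems(2)] by simp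
  show ?case using Cons.IH[OF _ y] Cons.prems(1) ny s by simp
qed

lemma fold_diff:
  assumes Oa: "unitary_mat n Oa" and Ob: "unitary_mat n Ob"
  and adja: "mat_adjoint Oa = Oa" and adjb: "mat_adjoint Ob = Ob" and e0: "0 \<le> \<epsilon>"
  and eps: "\<And>z. z \<in> carrier_vec n \<Longrightarrow> nv (Oa *\<^sub>v z - Ob *\<^sub>v z) \<le> \<epsilon> * nv z"
  and V: "\<forall>s \<in> set ss. unitary_mat (2*(n*w)) (snd s)"
  and x: "x \<in> carrier_vec (2*(n*w))" and y: "y \<in> carrier_vec (2*(n*w))"
  shows "nv (foldl (\<lambda>\<psi> (q, V). V *\<^sub>v (query_op n w Oa q *\<^sub>v \<psi>)) x ss
            - foldl (\<lambda>\<psi> (q, V). V *\<^sub>v (query_op n w Ob q *\<^sub>v \<psi>)) y ss)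
         \<le> nv (x - y) + real (length ss) * \<epsilon> * nv y"
  using V x y
proof (induction ss arbitrary: x y)
  case Nil then show ?case by simp
next
  case (Cons s ss)
  obtain q V where s: "s = (q, V)" by (cases s)
  have Oac: "Oa \<in> carrier_mat n n" using Oa unfolding unitary_mat_def by auto
  have Obc: "Ob \<in> carrier_mat n n" using Ob unfolding unitary_mat_def by auto
  have Vu: "unitary_mat (2*(n*w)) V" using Cons.prems s by auto
  have Vc: "V \<in> carrier_mat (2*(n*w)) (2*(n*w))" using Vu unfolding unitary_mat_def by auto
  have Qax: "query_op n w Oa q *\<^sub>v x \<in> carrier_vec (2*(n*w))"
    using mult_mat_vec_carrier[OF Q_carrier[OF Oac, of w q] Cons.prems(2)] .
  have Qay: "query_op n w Oa q *\<^sub>v y \<in> carrier_vec (2*(n*w))"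
    using mult_mat_vec_carrier[OF Q_carrier[OF Oac, of w q] Cons.prems(3)] .
  have Qby: "query_op n w Ob q *\<^sub>v y \<in> carrier_vec (2*(n*w))"
    using mult_mat_vec_carrier[OF Q_carrier[OF Obc, of w q] Cons.prems(3)] .
  have x': "V *\<^sub>v (query_op n w Oa q *\<^sub>v x) \<in> carrier_vec (2*(n*w))" using Vc Qax by auto
  have y': "V *\<^sub>v (query_op n w Ob q *\<^sub>v y) \<in> carrier_vec (2*(n*w))" using Vc Qby by auto
  have ny: "nv (V *\<^sub>v (query_op n w Ob q *\<^sub>v y)) = nv y"
    using unitary_nv[OF Vu Qby] Q_norm[OF Ob adjb Cons.prems(3)] by simp
  have "nv (V *\<^sub>v (query_op n w Oa q *\<^sub>v x) - V *\<^sub>v (query_op n w Ob q *\<^sub>v y))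
      = nv (V *\<^sub>v (query_op n w Oa q *\<^sub>v x - query_op n w Ob q *\<^sub>v y))"
    using mult_minus_distrib_mat_vec[OF Vc Qax Qby] by simp
  also have "\<dots> = nv (query_op n w Oa q *\<^sub>v x - query_op n w Ob q *\<^sub>v y)"
    using Qax Qby by (intro unitary_nv[OF Vu]) auto
  also have "\<dots> \<le> nv (query_op n w Oa q *\<^sub>v x - query_op n w Oa q *\<^sub>v y) + nv (query_op n w Oa q *\<^sub>v y - query_op n w Ob q *\<^sub>v y)"
    by (rule nv_tri[OF Qax Qay Qby])
  also have "nv (query_op n w Oa q *\<^sub>v x - query_op n w Oa q *\<^sub>v y) = nv (query_op n w Oa q *\<^sub>v (x - y))"
    using mult_minus_distrib_mat_vec[OF Q_carrier[OF Oac, of w q] Cons.prems(2,3)] by simp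
  also have "\<dots> = nv (x - y)" using Cons.prems(2,3) by (intro Q_norm[OF Oa adja]) auto
  also have "nv (query_op n w Oa q *\<^sub>v y - query_op n w Ob q *\<^sub>v y) \<le> \<epsilon> * nv y"
    by (rule Q_diff[OF Oac Obc adja adjb e0 eps Cons.prems(3)])
  finally have st: "nv (V *\<^sub>v (query_op n w Oa q *\<^sub>v x) - V *\<^sub>v (query_op n w Ob q *\<^sub>v y)) \<le> nv (x - y) + \<epsilon> * nv y"
    by simp
  have "nv (foldl (\<lambda>\<psi> (q, V). V *\<^sub>v (query_op n w Oa q *\<^sub>v \<psi>)) x (s # ss)
            - foldl (\<lambda>\<psi> (q, V). V *\<^sub>v (query_op n w Ob q *\<^sub>v \<psi>)) y (s # ss))
     \<le> nv (V *\<^sub>v (query_op n w Oa q *\<^sub>v x) - V *\<^sub>v (query_op n w Ob q *\<^sub>v y)) + real (length ss) * \<epsilon> * nv y"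
    using Cons.IH[OF _ x' y'] Cons.prems(1) ny s by simp
  also have "\<dots> \<le> nv (x - y) + \<epsilon> * nv y + real (length ss) * \<epsilon> * nv y" using st by simp
  finally show ?case by (simp add: algebra_simps)
qed

lemma adj_one: "mat_adjoint (1\<^sub>m m) = (1\<^sub>m m :: complex mat)"
proof -
  have c: "mat_adjoint (1\<^sub>m m :: complex mat) \<in> carrier_mat m m" by (rule adj_carrier) simp
  show ?thesis by (rule eq_matI) (use c in \<open>auto simp: adj_idx[of _ m m]\<close>)
qed

lemma unitary_one: "unitary_mat m (1\<^sub>m m)"
  unfolding unitary_mat_def adj_one by simp

lemma Q_e0_0: assumes U: "U \<in> carrier_mat n n" and n: "n > 0" and w: "w > 0"
  shows "(query_op n w U (False, False) *\<^sub>v unit_vec (2*(n*w)) 0) $ 0 = U $$ (0,0)"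
proof -
  have Qc: "query_op n w U (False, False) \<in> carrier_mat (2*(n*w)) (2*(n*w))" by (rule Q_carrier[OF U])
  have p: "0 < 2*(n*w)" using n w by simp
  have "(query_op n w U (False, False) *\<^sub>v unit_vec (2*(n*w)) 0) $ 0
      = (\<Sum>j<2*(n*w). query_op n w U (False, False) $$ (0,j) * unit_vec (2*(n*w)) 0 $ j)"
    by (rule mv_idx[OF Qc _ p]) simp
  also have "\<dots> = query_op n w U (False, False) $$ (0,0)"
    using p by (simp add: unit_vec_def if_distrib cong: if_cong)
  also have "\<dots> = U $$ (0,0)"
    unfolding query_op_def Let_def kron_def using U n w by simp
  finally show ?thesis .
qed

lemma part1: assumes N: "N \<ge> 2" and d: "d \<ge> 1"
  shows "\<exists>A. wf_qalg (N * d) A \<and> num_queries A = 1 \<and>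
               (\<forall>C U. perm_matrix N C \<longrightarrow> block_encoding N d C U \<longrightarrow>
                  success_prob (N * d) A C U = 1)"
proof -
  define D where "D = 2 * (N*d) * 1"
  define A where "A = \<lparr>work_dim = 1, init_unitary = 1\<^sub>m D, steps = [((False, False), 1\<^sub>m D)], accept_set = {0::nat}\<rparr>"
  have ad: "alg_dim (N*d) A = D" unfolding alg_dim_def A_def D_def by simp
  have wf: "wf_qalg (N * d) A" unfolding wf_qalg_def ad by (simp add: A_def unitary_one)
  have nq: "num_queries A = 1" unfolding num_queries_def A_def by simp
  have Dp: "0 < D" using N d unfolding D_def by simp
  {
    fix C U assume C: "perm_matrix N C" and U: "block_encoding N d C U"
    have Uc: "U \<in> carrier_mat (N*d) (N*d)" using U unfolding block_encoding_def unitary_mat_def by auto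
    have U00: "U $$ (0,0) = C $$ (0,0)" using U N unfolding block_encoding_def by (metis mult_0 less_le_trans pos2)
    obtain \<sigma> where "\<forall>j<N. \<forall>k<N. C $$ (j,k) = (if j = \<sigma> k then 1 else 0)" using C unfolding perm_matrix_def by auto
    then have C00: "C $$ (0,0) = 0 \<or> C $$ (0,0) = 1" using N by (metis less_le_trans pos2)
    have fs: "final_state (N*d) A U = query_op (N*d) 1 U (False, False) *\<^sub>v unit_vec (2*((N*d)*1)) 0"
      unfolding final_state_def ad using Q_carrier[OF Uc, of 1 "(False,False)"]
      by (simp add: A_def D_def)
    have "final_state (N*d) A U $ 0 = C $$ (0,0)"
      unfolding fs using Q_e0_0[OF Uc, of 1] N d U00 by simp
    then have p: "prob_output1 (N*d) A U = (cmod (C $$ (0,0)))^2"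
      unfolding prob_output1_def ad using Dp by (simp add: A_def)
    have "success_prob (N * d) A C U = 1"
      unfolding success_prob_def p using C00 by auto
  }
  then show ?thesis using wf nq by blast
qed

definition hh :: "nat \<Rightarrow> complex vec \<Rightarrow> complex \<Rightarrow> complex mat" where
  "hh n w a = mat n n (\<lambda>(i,j). (if i = j then 1 else 0) - a * w $ i * cnj (w $ j))"

lemma hh_carrier[simp]: "hh n w a \<in> carrier_mat n n" unfolding hh_def by auto
lemma hh_dims[simp]: "dim_row (hh n w a) = n" "dim_col (hh n w a) = n" unfolding hh_def by auto

lemma hh_apply: assumes w: "w \<in> carrier_vec n" and y: "y \<in> carrier_vec n"
  shows "hh n w a *\<^sub>v y = y - (a * (\<Sum>j<n. cnj (w $ j) * y $ j)) \<cdot>\<^sub>v w"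
proof (rule eq_vecI)
  show "dim_vec (hh n w a *\<^sub>v y) = dim_vec (y - (a * (\<Sum>j<n. cnj (w $ j) * y $ j)) \<cdot>\<^sub>v w)" using y w by simp
  fix i assume "i < dim_vec (y - (a * (\<Sum>j<n. cnj (w $ j) * y $ j)) \<cdot>\<^sub>v w)"
  then have i: "i < n" using y w by simp
  have "(hh n w a *\<^sub>v y) $ i = (\<Sum>j<n. hh n w a $$ (i,j) * y $ j)" by (rule mv_idx[OF hh_carrier y i])
  also have "\<dots> = (\<Sum>j<n. (if i = j then y $ j else 0) - a * w $ i * (cnj (w $ j) * y $ j))"
    by (intro sum.cong refl) (use i in \<open>auto simp: hh_def algebra_simps\<close>)
  also have "\<dots> = y $ i - a * w $ i * (\<Sum>j<n. cnj (w $ j) * y $ j)"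
    using i by (simp add: sum_subtractf sum_distrib_left)
  also have "\<dots> = (y - (a * (\<Sum>j<n. cnj (w $ j) * y $ j)) \<cdot>\<^sub>v w) $ i" using i w y by simp
  finally show "(hh n w a *\<^sub>v y) $ i = (y - (a * (\<Sum>j<n. cnj (w $ j) * y $ j)) \<cdot>\<^sub>v w) $ i" .
qed

lemma hh_adj: assumes a: "cnj a = a" shows "mat_adjoint (hh n w a) = hh n w a"
proof -
  have c: "mat_adjoint (hh n w a) \<in> carrier_mat n n" by (rule adj_carrier) simp
  show ?thesis by (rule eq_matI) (use c a in \<open>auto simp: adj_idx[of _ n n] hh_def\<close>)
qed

lemma hh_sq: assumes w: "w \<in> carrier_vec n" and a: "a * a * (\<Sum>j<n. w $ j * cnj (w $ j)) = 2 * a"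
  shows "hh n w a * hh n w a = 1\<^sub>m n"
proof (rule eq_matI)
  fix i k assume i: "i < dim_row (1\<^sub>m n :: complex mat)" and k: "k < dim_col (1\<^sub>m n :: complex mat)"
  then have i: "i < n" and k: "k < n" by auto
  have "(hh n w a * hh n w a) $$ (i,k) = (\<Sum>j<n. hh n w a $$ (i,j) * hh n w a $$ (j,k))"
    using i k by (subst index_mult_mat) (auto simp: scalar_prod_def atLeast0LessThan intro!: sum.cong)
  also have "\<dots> = (\<Sum>j<n. (if i = j then (if j = k then 1 else 0) else 0) - (if i = j then a * w $ j * cnj (w $ k) else 0)
        - (if j = k then a * w $ i * cnj (w $ j) else 0) + a * a * w $ i * cnj (w $ k) * (w $ j * cnj (w $ j)))"
    by (intro sum.cong refl) (use i k in \<open>auto simp: hh_def algebra_simps\<close>)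
  also have "\<dots> = (if i = k then 1 else 0) - a * w $ i * cnj (w $ k) - a * w $ i * cnj (w $ k)
        + a * a * w $ i * cnj (w $ k) * (\<Sum>j<n. w $ j * cnj (w $ j))"
    using i k by (simp add: sum.distrib sum_subtractf sum_distrib_left)
  also have "\<dots> = (if i = k then 1 else 0) + w $ i * cnj (w $ k) * (a * a * (\<Sum>j<n. w $ j * cnj (w $ j)) - 2 * a)"
    by (simp add: algebra_simps)
  also have "\<dots> = 1\<^sub>m n $$ (i,k)" using a i k by simp
  finally show "(hh n w a * hh n w a) $$ (i,k) = 1\<^sub>m n $$ (i,k)" .
qed auto

lemma hh_spec:
  assumes v: "v \<in> carrier_vec n" and n: "0 < n" and nv1: "nv v = 1" and v0: "v $ 0 = complex_of_real r" and r: "r < 1"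
  defines "w \<equiv> unit_vec n 0 - v" and "a \<equiv> complex_of_real (1/(1-r))"
  shows "unitary_mat n (hh n w a)" "mat_adjoint (hh n w a) = hh n w a"
        "hh n w a *\<^sub>v unit_vec n 0 = v" "nv w = sqrt (2 - 2*r)"
proof -
  have wc: "w \<in> carrier_vec n" unfolding w_def using v by simp
  have ca: "cnj a = a" unfolding a_def by simp
  have "(nv w)^2 = (\<Sum>j<n. (cmod (w $ j))^2)" using wc by (simp add: nv_sq)
  also have "\<dots> = (\<Sum>j<n. (cmod (v $ j))^2 + (if j = 0 then 1 - 2*r else 0))"
  proof (intro sum.cong refl)
    fix j assume j: "j \<in> {..<n}"
    show "(cmod (w $ j))^2 = (cmod (v $ j))^2 + (if j = 0 then 1 - 2*r else 0)"
    proof (cases "j = 0")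
      case True
      have "w $ j = complex_of_real (1 - r)" using True j v v0 unfolding w_def by simp
      then have e1: "(cmod (w $ j))^2 = (1 - r)^2" by (simp only: norm_of_real power2_abs)
      have e2: "(cmod (v $ j))^2 = r^2" using True v0 by (simp add: power2_abs)
      show ?thesis unfolding e1 e2 using True by (simp add: power2_eq_square algebra_simps)
    next
      case False
      have "w $ j = - v $ j" using False j v unfolding w_def by simp
      then show ?thesis using False by simp
    qed
  qed
  also have "\<dots> = (nv v)^2 + (1 - 2*r)" using v n by (simp add: nv_sq sum.distrib)
  finally have nw2: "(nv w)^2 = 2 - 2*r" using nv1 by simp
  then show "nv w = sqrt (2 - 2*r)" by (metis nv_nonneg real_sqrt_unique)
  have S: "(\<Sum>j<n. w $ j * cnj (w $ j)) = complex_of_real (2 - 2*r)"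
    using nv_sq_c[of w] wc nw2 by simp
  have aa: "a * a * (\<Sum>j<n. w $ j * cnj (w $ j)) = 2 * a"
    unfolding S a_def using r by (simp add: field_simps power2_eq_square del: of_real_diff of_real_mult) (simp add: field_simps)
  have sq: "hh n w a * hh n w a = 1\<^sub>m n" by (rule hh_sq[OF wc aa])
  show adj: "mat_adjoint (hh n w a) = hh n w a" by (rule hh_adj[OF ca])
  show "unitary_mat n (hh n w a)" unfolding unitary_mat_def adj using sq by simp
  have s0: "(\<Sum>j<n. cnj (w $ j) * unit_vec n 0 $ j) = complex_of_real (1 - r)"
  proof -
    have "(\<Sum>j<n. cnj (w $ j) * unit_vec n 0 $ j) = (\<Sum>j<n. if j = 0 then cnj (w $ 0) else 0)"
      by (intro sum.cong refl) (auto simp: unit_vec_def)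
    also have "\<dots> = cnj (w $ 0)" using n by simp
    also have "\<dots> = complex_of_real (1 - r)" using n v v0 unfolding w_def by simp
    finally show ?thesis .
  qed
  have a1: "a * complex_of_real (1 - r) = 1" unfolding a_def using r by (simp flip: of_real_mult)
  show "hh n w a *\<^sub>v unit_vec n 0 = v"
    unfolding hh_apply[OF wc unit_vec_carrier] s0 a1 using v unfolding w_def by auto
qed

lemma cs2: assumes w: "w \<in> carrier_vec n" and z: "z \<in> carrier_vec n"
  shows "cmod (\<Sum>j<n. cnj (w $ j) * z $ j) \<le> nv w * nv z"
proof -
  have "cmod (\<Sum>j<n. cnj (w $ j) * z $ j) \<le> (\<Sum>j<n. \<bar>cmod (w $ j)\<bar> * \<bar>cmod (z $ j)\<bar>)"
    by (rule order_trans[OF norm_sum]) (simp add: norm_mult)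
  also have "\<dots> \<le> L2_set (\<lambda>j. cmod (w $ j)) {..<n} * L2_set (\<lambda>j. cmod (z $ j)) {..<n}"
    by (rule L2_set_mult_ineq)
  also have "\<dots> = nv w * nv z" unfolding nv_def using w z by simp
  finally show ?thesis .
qed

lemma nv_add3: assumes "x \<in> carrier_vec n" "y \<in> carrier_vec n" "u \<in> carrier_vec n"
  shows "nv (x + y + u) \<le> nv x + nv y + nv u"
  using nv_add[of "x + y" n u] nv_add[of x n y] assms by auto

lemma hh_diff:
  assumes v1: "v1 \<in> carrier_vec n" and v0: "v0 \<in> carrier_vec n" and n: "0 < n"
  and n1: "nv v1 = 1" and n0: "nv v0 = 1" and v10: "v1 $ 0 = complex_of_real r" and v00: "v0 $ 0 = 0"
  and r0: "0 \<le> r" and r: "r < 1" and dl: "nv (v1 - v0) \<le> \<delta>"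
  and z: "z \<in> carrier_vec n"
  shows "nv (hh n (unit_vec n 0 - v1) (complex_of_real (1/(1-r))) *\<^sub>v z
           - hh n (unit_vec n 0 - v0) (complex_of_real (1/(1-0))) *\<^sub>v z) \<le> (2*r + 4*\<delta>) * nv z"
proof -
  define w1 where "w1 = unit_vec n 0 - v1"
  define w0 where "w0 = unit_vec n 0 - v0"
  define a1 where "a1 = complex_of_real (1/(1-r))"
  have w1c: "w1 \<in> carrier_vec n" unfolding w1_def using v1 by simp
  have w0c: "w0 \<in> carrier_vec n" unfolding w0_def using v0 by simp
  have nw1: "nv w1 = sqrt (2 - 2*r)" unfolding w1_def by (rule hh_spec(4)[OF v1 n n1 v10 r])
  have nw0: "nv w0 = sqrt 2" unfolding w0_def using hh_spec(4)[OF v0 n n0 _, of 0] v00 by simp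
  have "sqrt (2 - 2*r) \<le> sqrt 4" using r0 by (intro real_sqrt_le_mono) simp
  then have nw1b: "nv w1 \<le> 2" unfolding nw1 by simp
  have "sqrt 2 \<le> sqrt 4" by (intro real_sqrt_le_mono) simp
  then have nw0b: "nv w0 \<le> 2" unfolding nw0 by simp
  have dw: "w0 - w1 = v1 - v0" unfolding w0_def w1_def using v0 v1 by (intro eq_vecI) auto
  have ndw: "nv (w0 - w1) \<le> \<delta>" using dw dl by simp
  define s1 where "s1 = (\<Sum>j<n. cnj (w1 $ j) * z $ j)"
  define s0 where "s0 = (\<Sum>j<n. cnj (w0 $ j) * z $ j)"
  have s1b: "cmod s1 \<le> nv w1 * nv z" unfolding s1_def by (rule cs2[OF w1c z])
  have s0b: "cmod s0 \<le> nv w0 * nv z" unfolding s0_def by (rule cs2[OF w0c z])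
  have s01: "s0 - s1 = (\<Sum>j<n. cnj ((w0 - w1) $ j) * z $ j)"
    unfolding s0_def s1_def using w0c w1c by (simp add: sum_subtractf[symmetric] algebra_simps)
  have s01b: "cmod (s0 - s1) \<le> \<delta> * nv z"
    unfolding s01 using cs2[of "w0 - w1" n z] w0c w1c z ndw
    by (meson minus_carrier_vec mult_right_mono nv_nonneg order_trans)
  have eq: "hh n w1 a1 *\<^sub>v z - hh n w0 (complex_of_real (1/(1-0))) *\<^sub>v z
     = (- (a1 - 1) * s1) \<cdot>\<^sub>v w1 + (s0 - s1) \<cdot>\<^sub>v w1 + s0 \<cdot>\<^sub>v (w0 - w1)"
    unfolding hh_apply[OF w1c z] hh_apply[OF w0c z] s1_def[symmetric] s0_def[symmetric]
    using w1c w0c z by (intro eq_vecI) (auto simp: algebra_simps)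
  have "nv ((- (a1 - 1) * s1) \<cdot>\<^sub>v w1 + (s0 - s1) \<cdot>\<^sub>v w1 + s0 \<cdot>\<^sub>v (w0 - w1))
     \<le> nv ((- (a1 - 1) * s1) \<cdot>\<^sub>v w1) + nv ((s0 - s1) \<cdot>\<^sub>v w1) + nv (s0 \<cdot>\<^sub>v (w0 - w1))"
    by (rule nv_add3) (use w1c w0c in auto)
  also have "\<dots> = cmod (a1 - 1) * cmod s1 * nv w1 + cmod (s0 - s1) * nv w1 + cmod s0 * nv (w0 - w1)"
    by (simp add: nv_smult norm_mult norm_minus_commute)
  also have "\<dots> \<le> cmod (a1 - 1) * (nv w1 * nv z) * nv w1 + (\<delta> * nv z) * 2 + (2 * nv z) * \<delta>"
  proof -
    have "cmod (a1 - 1) * cmod s1 * nv w1 \<le> cmod (a1 - 1) * (nv w1 * nv z) * nv w1"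
      using s1b by (intro mult_right_mono mult_left_mono) auto
    moreover have "cmod (s0 - s1) * nv w1 \<le> (\<delta> * nv z) * 2"
      using s01b nw1b order_trans[OF norm_ge_zero s01b] by (intro mult_mono) auto
    moreover have "cmod s0 * nv (w0 - w1) \<le> (2 * nv z) * \<delta>"
      using s0b nw0b ndw order_trans[OF s0b mult_right_mono[OF nw0b nv_nonneg]] by (intro mult_mono) auto
    ultimately show ?thesis by linarith
  qed
  also have "cmod (a1 - 1) * (nv w1 * nv z) * nv w1 = 2 * r * nv z"
  proof -
    have ca: "cmod (a1 - 1) = r / (1 - r)"
    proof -
      have "a1 - 1 = complex_of_real (r / (1 - r))" unfolding a1_def using r by (simp add: field_simps)
      then have "cmod (a1 - 1) = \<bar>r / (1 - r)\<bar>" by (simp only: norm_of_real)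
      then show ?thesis using r r0 by simp
    qed
    have ww: "nv w1 * nv w1 = 2 - 2*r" unfolding nw1 using r by simp
    have "cmod (a1 - 1) * (nv w1 * nv z) * nv w1 = (r/(1-r)) * (nv w1 * nv w1) * nv z" unfolding ca by (simp add: mult_ac)
    also have "\<dots> = (r/(1-r)) * (2 - 2*r) * nv z" unfolding ww ..
    also have "(r/(1-r)) * (2 - 2*r) = 2 * r" using r by (simp add: field_simps)
    finally show ?thesis by simp
  qed
  finally show ?thesis unfolding w1_def[symmetric] w0_def[symmetric] a1_def[symmetric] eq
    by (simp add: algebra_simps)
qed

lemma prob_diff: assumes a: "a \<in> carrier_vec D" and b: "b \<in> carrier_vec D" and na: "nv a = 1" and nb: "nv b = 1"
  shows "(\<Sum>i\<in>S \<inter> {..<D}. (cmod (a $ i))^2) - (\<Sum>i\<in>S \<inter> {..<D}. (cmod (b $ i))^2) \<le> 2 * nv (a - b)"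
proof -
  have e: "nv (a - b) = L2_set (\<lambda>i. cmod ((a - b) $ i)) {..<D}" using b by (simp add: nv_def)
  have "(\<Sum>i\<in>S \<inter> {..<D}. (cmod (a $ i))^2) - (\<Sum>i\<in>S \<inter> {..<D}. (cmod (b $ i))^2)
      = (\<Sum>i\<in>S \<inter> {..<D}. (cmod (a $ i))^2 - (cmod (b $ i))^2)" by (simp add: sum_subtractf)
  also have "\<dots> \<le> (\<Sum>i\<in>S \<inter> {..<D}. cmod ((a - b) $ i) * (cmod (a $ i) + cmod (b $ i)))"
  proof (rule sum_mono)
    fix i assume i: "i \<in> S \<inter> {..<D}"
    have "(cmod (a $ i))^2 - (cmod (b $ i))^2 = (cmod (a $ i) - cmod (b $ i)) * (cmod (a $ i) + cmod (b $ i))"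
      by (simp add: power2_eq_square algebra_simps)
    also have "\<dots> \<le> cmod (a $ i - b $ i) * (cmod (a $ i) + cmod (b $ i))"
      by (intro mult_right_mono) (auto intro: order_trans[OF abs_ge_self norm_triangle_ineq3])
    finally show "(cmod (a $ i))^2 - (cmod (b $ i))^2 \<le> cmod ((a - b) $ i) * (cmod (a $ i) + cmod (b $ i))"
      using i b by simp
  qed
  also have "\<dots> \<le> (\<Sum>i<D. cmod ((a - b) $ i) * (cmod (a $ i) + cmod (b $ i)))"
    by (rule sum_mono2) auto
  also have "\<dots> = (\<Sum>i<D. \<bar>cmod ((a - b) $ i)\<bar> * \<bar>cmod (a $ i) + cmod (b $ i)\<bar>)" by simp
  also have "\<dots> \<le> L2_set (\<lambda>i. cmod ((a - b) $ i)) {..<D} * L2_set (\<lambda>i. cmod (a $ i) + cmod (b $ i)) {..<D}"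
    by (rule L2_set_mult_ineq)
  also have "L2_set (\<lambda>i. cmod ((a - b) $ i)) {..<D} * L2_set (\<lambda>i. cmod (a $ i) + cmod (b $ i)) {..<D}
     \<le> L2_set (\<lambda>i. cmod ((a - b) $ i)) {..<D} * (nv a + nv b)"
  proof (rule mult_left_mono)
    show "L2_set (\<lambda>i. cmod (a $ i) + cmod (b $ i)) {..<D} \<le> nv a + nv b"
      unfolding nv_def using a b L2_set_triangle_ineq[of "\<lambda>i. cmod (a $ i)" "\<lambda>i. cmod (b $ i)" "{..<D}"] by simp
  qed simp
  also have "\<dots> = nv (a - b) * 2" using e na nb by simp
  finally show ?thesis by simp
qed

definition pmat :: "nat \<Rightarrow> (nat \<Rightarrow> nat) \<Rightarrow> complex mat" where
  "pmat N \<sigma> = mat N N (\<lambda>(j,k). if j = \<sigma> k then 1 else 0)"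

lemma pmat_perm: "\<sigma> permutes {..<N} \<Longrightarrow> perm_matrix N (pmat N \<sigma>)"
  unfolding perm_matrix_def pmat_def by auto

lemma vec_pmat_idx: assumes "j < N" "k < N"
  shows "vectorize N (pmat N \<sigma>) $ (j*N + k) = (if j = \<sigma> k then 1 else 0)"
proof -
  have "j*N + k < N*N" using idx_lt[OF assms] .
  then show ?thesis using assms unfolding vectorize_def pmat_def by simp
qed

lemma vec_pmat_carrier[simp]: "vectorize N (pmat N \<sigma>) \<in> carrier_vec (N*N)"
  unfolding vectorize_def by simp

lemma nv_vec_pmat: assumes s: "\<sigma> permutes {..<N}"
  shows "nv (vectorize N (pmat N \<sigma>)) = sqrt (real N)"
proof -
  have "(nv (vectorize N (pmat N \<sigma>)))^2 = (\<Sum>i<N*N. (cmod (vectorize N (pmat N \<sigma>) $ i))^2)"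
    by (simp add: nv_sq vectorize_def)
  also have "\<dots> = (\<Sum>j<N. \<Sum>k<N. (cmod (vectorize N (pmat N \<sigma>) $ (j*N+k)))^2)" by (rule sum_split)
  also have "\<dots> = (\<Sum>j<N. \<Sum>k<N. if j = \<sigma> k then 1 else 0)"
    by (intro sum.cong refl) (simp add: vec_pmat_idx)
  also have "\<dots> = (\<Sum>k<N. \<Sum>j<N. if j = \<sigma> k then 1 else 0)" by (rule sum.swap)
  also have "\<dots> = (\<Sum>k<N. 1)"
    by (intro sum.cong refl) (use permutes_in_image[OF s] in auto)
  finally have "(nv (vectorize N (pmat N \<sigma>)))^2 = real N" by simp
  then show ?thesis by (metis nv_nonneg real_sqrt_unique)
qed

lemma nv_vec_diff: assumes N: "N \<ge> 2"
  shows "nv (vectorize N (pmat N id) - vectorize N (pmat N (transpose 0 1))) = 2"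
proof -
  let ?t = "transpose (0::nat) 1"
  have tN: "\<And>k. k < N \<Longrightarrow> ?t k < N" using N by (auto simp: transpose_def)
  have "(nv (vectorize N (pmat N id) - vectorize N (pmat N ?t)))^2
     = (\<Sum>i<N*N. (cmod ((vectorize N (pmat N id) - vectorize N (pmat N ?t)) $ i))^2)"
    by (simp add: nv_sq vectorize_def)
  also have "\<dots> = (\<Sum>j<N. \<Sum>k<N. (cmod ((vectorize N (pmat N id) - vectorize N (pmat N ?t)) $ (j*N+k)))^2)"
    by (rule sum_split)
  also have "\<dots> = (\<Sum>j<N. \<Sum>k<N. (cmod ((if j = k then 1 else 0) - (if j = ?t k then 1 else 0)))^2)"
  proof (intro sum.cong refl)
    fix j k assume j: "j \<in> {..<N}" and k: "k \<in> {..<N}"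
    have "j*N+k < N*N" using idx_lt[of j N k N] j k by simp
    have "(vectorize N (pmat N id) - vectorize N (pmat N ?t)) $ (j*N+k)
       = vectorize N (pmat N id) $ (j*N+k) - vectorize N (pmat N ?t) $ (j*N+k)"
      by (rule index_minus_vec(1)) (use \<open>j*N+k < N*N\<close> in \<open>simp add: vectorize_def\<close>)
    also have "\<dots> = (if j = k then 1 else 0) - (if j = ?t k then 1 else 0)"
      using j k by (simp only: vec_pmat_idx lessThan_iff id_apply)
    finally show "(cmod ((vectorize N (pmat N id) - vectorize N (pmat N ?t)) $ (j*N+k)))^2
       = (cmod ((if j = k then 1 else 0) - (if j = ?t k then 1 else 0)))^2" by simp
  qed
  also have "\<dots> = (\<Sum>k<N. \<Sum>j<N. (cmod ((if j = k then 1 else 0) - (if j = ?t k then 1 else 0)))^2)"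
    by (rule sum.swap)
  also have "\<dots> = (\<Sum>k<N. if k \<in> {0,1} then 2 else 0)"
  proof (intro sum.cong refl)
    fix k assume k: "k \<in> {..<N}"
    show "(\<Sum>j<N. (cmod ((if j = k then 1 else 0) - (if j = ?t k then 1 else 0)))^2) = (if k \<in> {0,1} then 2 else 0)"
    proof (cases "k \<in> {0,1}")
      case True
      then have ne: "?t k \<noteq> k" by (auto simp: transpose_def)
      have "(\<Sum>j<N. (cmod ((if j = k then 1 else 0) - (if j = ?t k then 1 else 0)))^2)
         = (\<Sum>j<N. (if j = k then 1 else 0) + (if j = ?t k then 1 else 0))"
        by (intro sum.cong refl) (use ne in auto)
      also have "\<dots> = 2" using k tN[of k] by (simp add: sum.distrib)
      finally show ?thesis using True by simp
    next
      case False
      then have "?t k = k" by (auto simp: transpose_def)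
      then show ?thesis using False by simp
    qed
  qed
  also have "\<dots> = (\<Sum>k\<in>{..<N} \<inter> {0,1}. 2)" by (rule sum.inter_restrict[symmetric]) simp
  also have "{..<N} \<inter> {0,1} = {0::nat,1}" using N by auto
  finally have "(nv (vectorize N (pmat N id) - vectorize N (pmat N ?t)))^2 = 2^2" by (simp add: id_def)
  then show ?thesis using power2_eq_iff_nonneg[of "nv (vectorize N (pmat N id) - vectorize N (pmat N ?t))" 2] by simp
qed

lemma nv_unit: "0 < D \<Longrightarrow> nv (unit_vec D 0) = 1"
proof -
  assume D: "0 < D"
  have "(nv (unit_vec D 0))^2 = (\<Sum>i<D. (cmod (unit_vec D 0 $ i))^2)" by (simp add: nv_sq)
  also have "\<dots> = (\<Sum>i<D. if i = 0 then 1 else 0)"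
    by (intro sum.cong refl) (auto simp: unit_vec_def)
  also have "\<dots> = 1" using D by simp
  finally show ?thesis using power2_eq_iff_nonneg[of "nv (unit_vec D 0)" 1] by simp
qed

lemma part2_main:
  assumes N: "N \<ge> 2" and wf: "wf_qalg (N * N) A"
  and H: "\<forall>C U. perm_matrix N C \<longrightarrow> state_prep_oracle N C U \<longrightarrow> success_prob (N * N) A C U \<ge> 2 / 3"
  shows "real (num_queries A) \<ge> 1/60 * sqrt (real N)"
proof -
  define n where "n = N * N"
  define w where "w = work_dim A"
  define T where "T = num_queries A"
  define t where "t = transpose (0::nat) 1"
  define sN where "sN = sqrt (real N)"
  define x1 where "x1 = vectorize N (pmat N id)"
  define x0 where "x0 = vectorize N (pmat N t)"
  define v1 where "v1 = (1 / complex_of_real (vec_norm2 x1)) \<cdot>\<^sub>v x1"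
  define v0 where "v0 = (1 / complex_of_real (vec_norm2 x0)) \<cdot>\<^sub>v x0"
  define r where "r = 1 / sN"
  define U1 where "U1 = hh n (unit_vec n 0 - v1) (complex_of_real (1/(1-r)))"
  define U0 where "U0 = hh n (unit_vec n 0 - v0) (complex_of_real (1/(1-0)))"
  have w1: "w \<ge> 1" using wf unfolding wf_qalg_def w_def by simp
  have n0: "0 < n" using N unfolding n_def by simp
  have sN1: "sN > 1" unfolding sN_def using N by simp
  have r0: "0 \<le> r" and r1: "r < 1" unfolding r_def using sN1 by auto
  have pid: "id permutes {..<N}" by (rule permutes_id)
  have pt: "t permutes {..<N}" unfolding t_def using N by (intro permutes_swap_id) auto
  have nx1: "vec_norm2 x1 = sN" unfolding x1_def sN_def nv_eq[symmetric] by (rule nv_vec_pmat[OF pid])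
  have nx0: "vec_norm2 x0 = sN" unfolding x0_def sN_def nv_eq[symmetric] by (rule nv_vec_pmat[OF pt])
  have x1c: "x1 \<in> carrier_vec n" unfolding x1_def n_def by simp
  have x0c: "x0 \<in> carrier_vec n" unfolding x0_def n_def by simp
  have v1c: "v1 \<in> carrier_vec n" unfolding v1_def using x1c by simp
  have v0c: "v0 \<in> carrier_vec n" unfolding v0_def using x0c by simp
  have nv1: "nv v1 = 1" unfolding v1_def nv_smult nx1 using sN1 nx1 nv_eq[of x1]
    by (simp add: norm_divide)
  have nv0: "nv v0 = 1" unfolding v0_def nv_smult nx0 using sN1 nx0 nv_eq[of x0]
    by (simp add: norm_divide)
  have x10: "x1 $ 0 = 1" using vec_pmat_idx[of 0 N 0 id] N unfolding x1_def by simp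
  have x00: "x0 $ 0 = 0" using vec_pmat_idx[of 0 N 0 t] N unfolding x0_def t_def by simp
  have v10: "v1 $ 0 = complex_of_real r" unfolding v1_def r_def nx1 using x10 x1c n0 by simp
  have v00: "v0 $ 0 = 0" unfolding v0_def using x00 x0c n0 by simp
  have dv: "v1 - v0 = (1 / complex_of_real sN) \<cdot>\<^sub>v (x1 - x0)"
    unfolding v1_def v0_def nx1 nx0 using x1c x0c by (intro eq_vecI) (auto simp: algebra_simps)
  have ndv: "nv (v1 - v0) \<le> 2 / sN"
    unfolding dv nv_smult using nv_vec_diff[OF N] sN1 unfolding x1_def x0_def t_def
    by (simp add: norm_divide)
  note s1 = hh_spec[OF v1c n0 nv1 v10 r1]
  have v00': "v0 $ 0 = complex_of_real 0" using v00 by simp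
  have z1: "(0::real) < 1" by simp
  note s0 = hh_spec[OF v0c n0 nv0 v00' z1]
  have U1u: "unitary_mat n U1" and U1a: "mat_adjoint U1 = U1" and U1e: "U1 *\<^sub>v unit_vec n 0 = v1"
    unfolding U1_def using s1 by auto
  have U0u: "unitary_mat n U0" and U0a: "mat_adjoint U0 = U0" and U0e: "U0 *\<^sub>v unit_vec n 0 = v0"
    unfolding U0_def using s0 by auto
  have eps: "\<And>z. z \<in> carrier_vec n \<Longrightarrow> nv (U1 *\<^sub>v z - U0 *\<^sub>v z) \<le> (2*r + 4*(2/sN)) * nv z"
    unfolding U1_def U0_def by (rule hh_diff[OF v1c v0c n0 nv1 nv0 v10 v00 r0 r1 ndv])
  have e0: "0 \<le> 2*r + 4*(2/sN)" using r0 sN1 by simp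
  have so1: "state_prep_oracle N (pmat N id) U1"
    unfolding state_prep_oracle_def using U1u U1e unfolding n_def v1_def x1_def by simp
  have so0: "state_prep_oracle N (pmat N t) U0"
    unfolding state_prep_oracle_def using U0u U0e unfolding n_def v0_def x0_def by simp
  have c1: "pmat N id $$ (0,0) = 1" unfolding pmat_def using N by simp
  have c0: "pmat N t $$ (0,0) \<noteq> 1" unfolding pmat_def t_def using N by simp
  have p1: "prob_output1 n A U1 \<ge> 2/3"
    using H pmat_perm[OF pid] so1 c1 unfolding success_prob_def n_def by auto
  have p0: "1 - prob_output1 n A U0 \<ge> 2/3"
    using H pmat_perm[OF pt] so0 c0 unfolding success_prob_def n_def by force
  have ad: "alg_dim n A = 2*(n*w)" unfolding alg_dim_def w_def by simp
  have ad': "alg_dim (N * N) A = 2*(n*w)" using ad unfolding n_def .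
  have D0: "0 < 2*(n*w)" using n0 w1 by simp
  have V: "\<forall>s \<in> set (steps A). unitary_mat (2*(n*w)) (snd s)"
    using wf unfolding wf_qalg_def ad' by simp
  have Ic: "init_unitary A \<in> carrier_mat (2*(n*w)) (2*(n*w))" and Iu: "unitary_mat (2*(n*w)) (init_unitary A)"
    using wf unfolding wf_qalg_def ad' unitary_mat_def by auto
  define \<psi> where "\<psi> = init_unitary A *\<^sub>v unit_vec (2*(n*w)) 0"
  have \<psi>c: "\<psi> \<in> carrier_vec (2*(n*w))" unfolding \<psi>_def using Ic by simp
  have n\<psi>: "nv \<psi> = 1" unfolding \<psi>_def using unitary_nv[OF Iu unit_vec_carrier] nv_unit[OF D0] by simp
  have f1: "final_state n A U1 = foldl (\<lambda>\<psi> (q, V). V *\<^sub>v (query_op n w U1 q *\<^sub>v \<psi>)) \<psi> (steps A)"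
    unfolding final_state_def ad \<psi>_def w_def ..
  have f0: "final_state n A U0 = foldl (\<lambda>\<psi> (q, V). V *\<^sub>v (query_op n w U0 q *\<^sub>v \<psi>)) \<psi> (steps A)"
    unfolding final_state_def ad \<psi>_def w_def ..
  have F1: "final_state n A U1 \<in> carrier_vec (2*(n*w))" "nv (final_state n A U1) = 1"
    unfolding f1 using fold_props[OF U1u U1a V \<psi>c] n\<psi> by auto
  have F0: "final_state n A U0 \<in> carrier_vec (2*(n*w))" "nv (final_state n A U0) = 1"
    unfolding f0 using fold_props[OF U0u U0a V \<psi>c] n\<psi> by auto
  have dist: "nv (final_state n A U1 - final_state n A U0) \<le> real T * (2*r + 4*(2/sN))"
    unfolding f1 f0 using fold_diff[OF U1u U0u U1a U0a e0 eps V \<psi>c \<psi>c] n\<psi>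
    by (simp add: nv_self T_def num_queries_def)
  have "prob_output1 n A U1 - prob_output1 n A U0 \<le> 2 * nv (final_state n A U1 - final_state n A U0)"
    unfolding prob_output1_def ad by (rule prob_diff[OF F1(1) F0(1) F1(2) F0(2)])
  then have "1/3 \<le> 2 * (real T * (2*r + 4*(2/sN)))" using p1 p0 dist by linarith
  then have "1/3 \<le> real T * (20 / sN)" unfolding r_def by (simp add: field_simps)
  then have "sN \<le> 60 * real T" using sN1 by (simp add: field_simps)
  then show ?thesis unfolding T_def sN_def by simp
qed

theorem theorem2:
  shows "(\<forall>N d. N \<ge> 2 \<longrightarrow> d \<ge> 1 \<longrightarrow>
            (\<exists>A. wf_qalg (N * d) A \<and> num_queries A = 1 \<and>
               (\<forall>C U. perm_matrix N C \<longrightarrow> block_encoding N d C U \<longrightarrow>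
                  success_prob (N * d) A C U = 1)))
       \<and> (\<exists>c > 0. \<forall>N A. N \<ge> 2 \<longrightarrow> wf_qalg (N * N) A \<longrightarrow>
            (\<forall>C U. perm_matrix N C \<longrightarrow> state_prep_oracle N C U \<longrightarrow>
               success_prob (N * N) A C U \<ge> 2 / 3) \<longrightarrow>
            real (num_queries A) \<ge> c * sqrt (real N))"
proof
  show "\<forall>N d. N \<ge> 2 \<longrightarrow> d \<ge> 1 \<longrightarrow>
            (\<exists>A. wf_qalg (N * d) A \<and> num_queries A = 1 \<and>
               (\<forall>C U. perm_matrix N C \<longrightarrow> block_encoding N d C U \<longrightarrow>
                  success_prob (N * d) A C U = 1))"
  proof (intro allI impI)
    fix N d :: nat assume "N \<ge> 2" "d \<ge> 1"
    then show "\<exists>A. wf_qalg (N * d) A \<and> num_queries A = 1 \<and>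
               (\<forall>C U. perm_matrix N C \<longrightarrow> block_encoding N d C U \<longrightarrow>
                  success_prob (N * d) A C U = 1)" by (rule part1)
  qed
  show "\<exists>c > 0. \<forall>N A. N \<ge> 2 \<longrightarrow> wf_qalg (N * N) A \<longrightarrow>
            (\<forall>C U. perm_matrix N C \<longrightarrow> state_prep_oracle N C U \<longrightarrow>
               success_prob (N * N) A C U \<ge> 2 / 3) \<longrightarrow>
            real (num_queries A) \<ge> c * sqrt (real N)"
  proof (rule exI[of _ "1/60"], rule conjI)
    show "(0::real) < 1/60" by simp
    show "\<forall>N A. N \<ge> 2 \<longrightarrow> wf_qalg (N * N) A \<longrightarrow>
            (\<forall>C U. perm_matrix N C \<longrightarrow> state_prep_oracle N C U \<longrightarrow>
               success_prob (N * N) A C U \<ge> 2 / 3) \<longrightarrow>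
            real (num_queries A) \<ge> 1/60 * sqrt (real N)"
    proof (intro allI impI)
      fix N A assume "N \<ge> 2" "wf_qalg (N * N) A"
        "\<forall>C U. perm_matrix N C \<longrightarrow> state_prep_oracle N C U \<longrightarrow> success_prob (N * N) A C U \<ge> 2 / 3"
      then show "real (num_queries A) \<ge> 1/60 * sqrt (real N)" by (rule part2_main)
    qed
  qed
qed

end
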